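(* $\mathfrak C_R \not\subseteq \mathfrak m^2$ if and only if $a_n \ge c_R$.
   Context: Let $k$ be a field and let $(R,\mathfrak m)$ be a complete local noetherian domain of dimension $1$ containing $k$ with $R/\mathfrak m = k$, with normalization $\overline R$ having residue field $k$, so $\overline R = k[[t]]$ and $R \subseteq k[[t]]$ is finite birational. Let $v$ be the $t$-adic valuation. For $A \subseteq k((t))$ let $v(A) = \{v(f): f\in A\setminus\{0\}\}$. The conductor is $\mathfrak C_R = \{x \in \overline R : x\overline R \subseteq R\} = t^{c_R}\overline R$, where $c_R$ is the conductor degree. The Herzog–Kunz sequence of $R$ is $v(\mathfrak m)\setminus v(\mathfrak m^2)$ listed increasingly as $a_1 < \cdots < a_n$. *)

theory Defs
  imports "HOL-Computational_Algebra.Formal_Power_Series"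
begin

text \<open>Setting: R is a k-subalgebra of k[[t]] (t = fps_X) containing k, with nonzero
conductor (i.e. R \<subseteq> k[[t]] finite birational). Such R is automatically a complete
local noetherian domain of dimension 1 with residue field k and normalization k[[t]].\<close>

definition admissible_ring :: "'a::field fps set \<Rightarrow> bool" where
  "admissible_ring R \<longleftrightarrow>
     (\<forall>c. fps_const c \<in> R) \<and>
     (\<forall>f\<in>R. \<forall>g\<in>R. f + g \<in> R) \<and>
     (\<forall>f\<in>R. - f \<in> R) \<and>
     (\<forall>f\<in>R. \<forall>g\<in>R. f * g \<in> R) \<and>
     (\<exists>N. \<forall>g. fps_X ^ N * g \<in> R)"

definition max_ideal :: "'a::field fps set \<Rightarrow> 'a fps set" where
  "max_ideal R = {f \<in> R. fps_nth f 0 = 0}"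

definition ideal_prod :: "'a::field fps set \<Rightarrow> 'a fps set \<Rightarrow> 'a fps set" where
  "ideal_prod I J = {f. \<exists>(n::nat) a b. (\<forall>i<n. a i \<in> I \<and> b i \<in> J) \<and> f = (\<Sum>i<n. a i * b i)}"

definition vals :: "'a::field fps set \<Rightarrow> nat set" where
  "vals A = subdegree ` (A - {0})"

definition conductor :: "'a::field fps set \<Rightarrow> 'a fps set" where
  "conductor R = {x. \<forall>y. x * y \<in> R}"

text \<open>Conductor degree c_R: the conductor is t^{c_R} k[[t]].\<close>
definition conductor_degree :: "'a::field fps set \<Rightarrow> nat" where
  "conductor_degree R = (LEAST c. fps_X ^ c \<in> conductor R)"

definition HK_last :: "'a::field fps set \<Rightarrow> nat" where
  "HK_last R = Max (vals (max_ideal R) - vals (ideal_prod (max_ideal R) (max_ideal R)))"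

end

theory Submission
  imports Defs
begin
unbundle fps_syntax
lemma ip_zero: "(0::'a::field fps) \<in> ideal_prod I J"
  unfolding ideal_prod_def by (rule CollectI, rule exI[of _ 0]) simp

lemma ip_prod: "a \<in> I \<Longrightarrow> b \<in> J \<Longrightarrow> (a * b :: 'a::field fps) \<in> ideal_prod I J"
  unfolding ideal_prod_def
  by (rule CollectI, rule exI[of _ 1], rule exI[of _ "\<lambda>_. a"], rule exI[of _ "\<lambda>_. b"]) simp

lemma ip_add:
  assumes "x \<in> ideal_prod I J" "y \<in> ideal_prod I J"
  shows "(x + y :: 'a::field fps) \<in> ideal_prod I J"
proof -
  obtain n1 a1 b1 where 1: "\<forall>i<(n1::nat). a1 i \<in> I \<and> b1 i \<in> J" "x = (\<Sum>i<n1. a1 i * b1 i)"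
    using assms(1) unfolding ideal_prod_def mem_Collect_eq by (elim exE conjE) (rule that, assumption+)
  obtain n2 a2 b2 where 2: "\<forall>i<(n2::nat). a2 i \<in> I \<and> b2 i \<in> J" "y = (\<Sum>i<n2. a2 i * b2 i)"
    using assms(2) unfolding ideal_prod_def mem_Collect_eq by (elim exE conjE) (rule that, assumption+)
  define a where "a i = (if i < n1 then a1 i else a2 (i - n1))" for i
  define b where "b i = (if i < n1 then b1 i else b2 (i - n1))" for i
  have "(\<Sum>i<n1+n2. a i * b i) = (\<Sum>i\<in>{0..<n1}. a i * b i) + (\<Sum>i\<in>{n1..<n1+n2}. a i * b i)"
    by (simp add: lessThan_atLeast0 sum.atLeastLessThan_concat)
  also have "(\<Sum>i\<in>{0..<n1}. a i * b i) = x" using 1 by (simp add: a_def b_def lessThan_atLeast0)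
  also have "(\<Sum>i\<in>{n1..<n1+n2}. a i * b i) = (\<Sum>i\<in>{0+n1..<n2+n1}. a i * b i)" by (simp add: add.commute)
  also have "\<dots> = (\<Sum>i\<in>{0..<n2}. a (i+n1) * b (i+n1))" by (rule sum.shift_bounds_nat_ivl)
  also have "\<dots> = y" using 2 by (simp add: a_def b_def lessThan_atLeast0)
  finally have "x + y = (\<Sum>i<n1+n2. a i * b i)" by simp
  moreover have "\<forall>i<n1+n2. a i \<in> I \<and> b i \<in> J" using 1 2 by (auto simp: a_def b_def)
  ultimately show ?thesis unfolding ideal_prod_def by blast
qed

lemma ip_smult:
  assumes "\<forall>a\<in>I. fps_const l * a \<in> I" "x \<in> ideal_prod I J"
  shows "fps_const l * (x :: 'a::field fps) \<in> ideal_prod I J"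
proof -
  obtain n a b where 1: "\<forall>i<(n::nat). a i \<in> I \<and> b i \<in> J" "x = (\<Sum>i<n. a i * b i)"
    using assms(2) unfolding ideal_prod_def mem_Collect_eq by (elim exE conjE) (rule that, assumption+)
  have "fps_const l * x = (\<Sum>i<n. (fps_const l * a i) * b i)"
    using 1 by (simp add: sum_distrib_left mult.assoc)
  moreover have "\<forall>i<n. fps_const l * a i \<in> I \<and> b i \<in> J" using 1 assms(1) by auto
  ultimately show ?thesis unfolding ideal_prod_def
    by (intro CollectI exI[of _ n] exI[of _ "\<lambda>i. fps_const l * a i"] exI[of _ b]) auto
qed

lemma ip_low:
  assumes "\<forall>a\<in>I. \<forall>i<e. a $ i = 0" "\<forall>a\<in>J. \<forall>i<e. a $ i = 0" "x \<in> ideal_prod I J"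
  shows "\<forall>i<e+e. (x :: 'a::field fps) $ i = 0"
proof -
  obtain n a b where 1: "\<forall>i<(n::nat). a i \<in> I \<and> b i \<in> J" "x = (\<Sum>i<n. a i * b i)"
    using assms(3) unfolding ideal_prod_def mem_Collect_eq by (elim exE conjE) (rule that, assumption+)
  have dec: "g = fps_X ^ e * fps_shift e g" if "\<forall>i<e. g $ i = 0" for g :: "'a fps"
  proof (rule fps_conv_fps_X_power_mult_fps_shift)
    show "g = 0 \<or> e \<le> subdegree g"
    proof (cases "g = 0")
      case False
      thus ?thesis using that subdegree_geI[of g e] by blast
    qed simp
  qed
  have "a i * b i = fps_X ^ (e+e) * (fps_shift e (a i) * fps_shift e (b i))" if "i < n" for i
  proof -
    have "a i = fps_X ^ e * fps_shift e (a i)" using 1(1) assms(1) that dec by blast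
    moreover have "b i = fps_X ^ e * fps_shift e (b i)" using 1(1) assms(2) that dec by blast
    ultimately have "a i * b i = (fps_X ^ e * fps_shift e (a i)) * (fps_X ^ e * fps_shift e (b i))"
      by simp
    also have "\<dots> = fps_X ^ (e+e) * (fps_shift e (a i) * fps_shift e (b i))"
      by (simp only: power_add mult_ac)
    finally show ?thesis .
  qed
  hence "x = fps_X ^ (e+e) * (\<Sum>i<n. fps_shift e (a i) * fps_shift e (b i))"
    using 1(2) by (simp add: sum_distrib_left)
  thus ?thesis by (simp add: fps_X_power_mult_nth)
qed

lemma ip_nth0:
  assumes "\<forall>a\<in>I. a $ 0 = 0" "x \<in> ideal_prod I J"
  shows "(x :: 'a::field fps) $ 0 = 0"
proof -
  obtain n a b where 1: "\<forall>i<(n::nat). a i \<in> I \<and> b i \<in> J" "x = (\<Sum>i<n. a i * b i)"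
    using assms(2) unfolding ideal_prod_def mem_Collect_eq by (elim exE conjE) (rule that, assumption+)
  thus ?thesis using assms(1) by (simp add: fps_sum_nth)
qed

lemma adm_unfold:
  assumes "admissible_ring R"
  shows "\<And>c. fps_const c \<in> R" "\<And>f g. f \<in> R \<Longrightarrow> g \<in> R \<Longrightarrow> f + g \<in> R"
        "\<And>f g. f \<in> R \<Longrightarrow> g \<in> R \<Longrightarrow> f * g \<in> R" "\<exists>N. \<forall>g. fps_X ^ N * g \<in> R"
  using assms unfolding admissible_ring_def by auto

lemma cond_X:
  assumes "admissible_ring R"
  shows "fps_X ^ conductor_degree R \<in> conductor R"
proof -
  obtain N where "\<forall>g. fps_X ^ N * g \<in> R" using adm_unfold(4)[OF assms] by blast
  hence "fps_X ^ N \<in> conductor R" unfolding conductor_def by auto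
  thus ?thesis unfolding conductor_degree_def by (rule LeastI)
qed

lemma cond_sub:
  fixes x :: "'a::field fps"
  assumes "x \<in> conductor R" "x \<noteq> 0"
  shows "conductor_degree R \<le> subdegree x"
proof -
  have "subdegree x \<le> subdegree (fps_X ^ subdegree x :: 'a fps)" by (simp add: fps_X_power_subdegree)
  then obtain k where k: "fps_X ^ subdegree x = x * k"
    using subdegree_le_imp_dvd_left_divring[OF assms(2)] by blast
  have "fps_X ^ subdegree x \<in> conductor R"
    using assms(1) unfolding conductor_def k by (simp add: mult.assoc)
  thus ?thesis unfolding conductor_degree_def by (rule Least_le)
qed

lemma max_ideal_smult:
  assumes "admissible_ring R" "a \<in> max_ideal R"
  shows "fps_const l * a \<in> max_ideal R"
  using assms adm_unfold[OF assms(1)] unfolding max_ideal_def by auto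

lemma big:
  fixes f z :: "'a::field fps"
  assumes "admissible_ring R" "conductor_degree R \<ge> 1" "f \<in> max_ideal R" "f \<noteq> 0" "z \<noteq> 0"
    "subdegree f + conductor_degree R \<le> subdegree z"
  shows "z \<in> ideal_prod (max_ideal R) (max_ideal R)"
proof -
  let ?c = "conductor_degree R"
  let ?g = "f * fps_X ^ ?c"
  have g0: "?g \<noteq> 0" using assms(4) by simp
  have "subdegree ?g = subdegree f + ?c" using assms(4) by (simp add: fps_X_power_subdegree)
  then obtain k where k: "z = ?g * k"
    using subdegree_le_imp_dvd_left_divring[OF g0] assms(6) by auto
  have "fps_X ^ ?c * k \<in> R" using cond_X[OF assms(1)] unfolding conductor_def by auto
  moreover have "(fps_X ^ ?c * k) $ 0 = 0" using assms(2) by (simp add: fps_X_power_mult_nth)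
  ultimately have "fps_X ^ ?c * k \<in> max_ideal R" unfolding max_ideal_def by auto
  hence "f * (fps_X ^ ?c * k) \<in> ideal_prod (max_ideal R) (max_ideal R)"
    using assms(3) by (intro ip_prod)
  thus ?thesis using k by (simp add: mult.assoc)
qed

theorem mainTheorem7:
  fixes R :: "'a::field fps set"
  assumes "admissible_ring R"
  shows "\<not> conductor R \<subseteq> ideal_prod (max_ideal R) (max_ideal R)
           \<longleftrightarrow> HK_last R \<ge> conductor_degree R"
proof (cases "conductor_degree R = 0")
  case True
  have "(1::'a fps) \<in> conductor R" using cond_X[OF assms] True by simp
  moreover have "(1::'a fps) \<notin> ideal_prod (max_ideal R) (max_ideal R)"
    using ip_nth0[of "max_ideal R" 1] unfolding max_ideal_def by auto
  ultimately show ?thesis using True by auto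
next
  case False
  let ?c = "conductor_degree R"
  let ?m = "max_ideal R"
  let ?m2 = "ideal_prod ?m ?m"
  define D where "D = vals ?m - vals ?m2"
  have c1: "?c \<ge> 1" using False by simp
  have Xc: "fps_X ^ ?c \<in> conductor R" by (rule cond_X[OF assms])
  have Xj: "fps_X ^ j \<in> conductor R" if "j \<ge> ?c" for j
  proof -
    have "fps_X ^ j = (fps_X ^ ?c :: 'a fps) * fps_X ^ (j - ?c)"
      using that by (simp flip: power_add)
    thus ?thesis using Xc unfolding conductor_def by (simp add: mult.assoc)
  qed
  have Xjm: "fps_X ^ j \<in> ?m" if "j \<ge> ?c" for j
  proof -
    have "fps_X ^ j * 1 \<in> R" using Xj[OF that] unfolding conductor_def by blast
    thus ?thesis using that c1 unfolding max_ideal_def by auto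
  qed
  have Xjv: "j \<in> vals ?m" if "j \<ge> ?c" for j
    using Xjm[OF that] unfolding vals_def
    by (intro image_eqI[of _ _ "fps_X ^ j"]) (auto simp: fps_X_power_subdegree)
  define e where "e = (LEAST j. j \<in> vals ?m)"
  have ev: "e \<in> vals ?m" unfolding e_def using Xjv[of ?c] by (intro LeastI) auto
  then obtain f where f: "f \<in> ?m" "f \<noteq> 0" "subdegree f = e" unfolding vals_def by auto
  have e1: "e \<ge> 1"
  proof -
    have "f $ 0 = 0" using f unfolding max_ideal_def by auto
    thus ?thesis using f subdegree_eq_0_iff[of f] by (cases e) auto
  qed
  have mlow: "\<forall>a\<in>?m. \<forall>i<e. a $ i = 0"
  proof (intro ballI allI impI)
    fix a i assume a: "a \<in> ?m" and i: "i < e"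
    show "a $ i = 0"
    proof (cases "a = 0")
      case False
      hence "subdegree a \<in> vals ?m" using a unfolding vals_def by auto
      hence "e \<le> subdegree a" unfolding e_def by (rule Least_le)
      thus ?thesis using i by (intro nth_less_subdegree_zero) auto
    qed simp
  qed
  have m2low: "\<forall>i<e+e. x $ i = 0" if "x \<in> ?m2" for x
    using ip_low[OF mlow mlow that] .
  have eD: "e \<in> D"
  proof -
    have "e \<notin> vals ?m2"
    proof
      assume "e \<in> vals ?m2"
      then obtain y where y: "y \<in> ?m2" "y \<noteq> 0" "subdegree y = e" unfolding vals_def by auto
      have "y $ e = 0" using m2low[OF y(1)] e1 by auto
      thus False using y by auto
    qed
    thus ?thesis using ev unfolding D_def by auto
  qed
  have Dbound: "D \<subseteq> {..<e + ?c}"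
  proof
    fix j assume j: "j \<in> D"
    show "j \<in> {..<e + ?c}"
    proof (rule ccontr)
      assume "j \<notin> {..<e + ?c}"
      hence jge: "j \<ge> e + ?c" by simp
      obtain z where z: "z \<in> ?m" "z \<noteq> 0" "subdegree z = j" using j unfolding D_def vals_def by auto
      have "z \<in> ?m2" using big[OF assms c1 f(1) f(2) z(2)] f(3) z(3) jge by simp
      hence "j \<in> vals ?m2" using z unfolding vals_def by auto
      thus False using j unfolding D_def by auto
    qed
  qed
  have finD: "finite D" using Dbound finite_subset by blast
  have HK: "HK_last R \<in> D" "\<And>j. j \<in> D \<Longrightarrow> j \<le> HK_last R"
    unfolding HK_last_def D_def[symmetric] using finD eD by (auto intro: Max_in)
  show ?thesis
  proof
    assume "HK_last R \<ge> ?c"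
    hence "fps_X ^ HK_last R \<in> conductor R" by (rule Xj)
    moreover have "fps_X ^ HK_last R \<notin> ?m2"
    proof
      assume "fps_X ^ HK_last R \<in> ?m2"
      hence "HK_last R \<in> vals ?m2" unfolding vals_def
        by (intro image_eqI[of _ _ "fps_X ^ HK_last R"]) (auto simp: fps_X_power_subdegree)
      thus False using HK(1) unfolding D_def by auto
    qed
    ultimately show "\<not> conductor R \<subseteq> ?m2" by blast
  next
    assume ncs: "\<not> conductor R \<subseteq> ?m2"
    show "HK_last R \<ge> ?c"
    proof (rule ccontr)
      assume "\<not> HK_last R \<ge> ?c"
      hence lt: "HK_last R < ?c" by simp
      have H: "j \<in> vals ?m2" if "j \<ge> ?c" for j
      proof (rule ccontr)
        assume "j \<notin> vals ?m2"
        hence "j \<in> D" using Xjv[OF that] unfolding D_def by auto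
        thus False using HK(2)[of j] lt that by auto
      qed
      have claim: "\<forall>z. (z = 0 \<or> ?c + e - k \<le> subdegree z) \<longrightarrow> z \<in> ?m2" if "k \<le> e" for k
        using that
      proof (induction k)
        case 0
        show ?case
        proof (intro allI impI)
          fix z :: "'a fps" assume "z = 0 \<or> ?c + e - 0 \<le> subdegree z"
          thus "z \<in> ?m2"
          proof
            assume "z = 0" thus ?thesis by (simp add: ip_zero)
          next
            assume "?c + e - 0 \<le> subdegree z"
            moreover have "?c + e - 0 \<le> subdegree z \<Longrightarrow> z \<noteq> 0" using c1 by auto
            ultimately show ?thesis using big[OF assms c1 f(1) f(2)] f(3) by auto
          qed
        qed
      next
        case (Suc k)
        have IH: "\<forall>z. (z = 0 \<or> ?c + e - k \<le> subdegree z) \<longrightarrow> z \<in> ?m2"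
          using Suc by simp
        show ?case
        proof (intro allI impI)
          fix z :: "'a fps" assume zh: "z = 0 \<or> ?c + e - Suc k \<le> subdegree z"
          show "z \<in> ?m2"
          proof (cases "z = 0 \<or> ?c + e - k \<le> subdegree z")
            case True thus ?thesis using IH by blast
          next
            case False
            define j where "j = ?c + e - Suc k"
            have z0: "z \<noteq> 0" and sz: "subdegree z = j" using False zh Suc.prems unfolding j_def by auto
            have "j \<ge> ?c" using Suc.prems unfolding j_def by simp
            then obtain y where y: "y \<in> ?m2" "y \<noteq> 0" "subdegree y = j"
              using H unfolding vals_def by force
            define l where "l = z $ j / y $ j"
            define z' where "z' = z - fps_const l * y"
            have yj: "y $ j \<noteq> 0" using y by auto
            have "z' = 0 \<or> ?c + e - k \<le> subdegree z'"
            proof (cases "z' = 0")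
              case False
              have "subdegree z' > j"
              proof (rule subdegree_greaterI[OF False])
                fix i assume "i \<le> j"
                then consider "i < j" | "i = j" using le_neq_implies_less by blast
                thus "z' $ i = 0"
                proof cases
                  case 1
                  have "z $ i = 0" by (rule nth_less_subdegree_zero) (use 1 sz in simp)
                  moreover have "y $ i = 0" by (rule nth_less_subdegree_zero) (use 1 y(3) in simp)
                  ultimately show ?thesis unfolding z'_def by simp
                next
                  case 2
                  have "z' $ j = z $ j - l * y $ j" unfolding z'_def by simp
                  also have "\<dots> = 0" unfolding l_def using yj by simp
                  finally show ?thesis using 2 by simp
                qed
              qed
              hence "subdegree z' \<ge> Suc j" by simp
              moreover have "Suc j = ?c + e - k" using Suc.prems unfolding j_def by simp
              ultimately show ?thesis by simp
            qed simp
            hence "z' \<in> ?m2" using IH by blast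
            moreover have "fps_const l * y \<in> ?m2"
              using y(1) max_ideal_smult[OF assms] by (intro ip_smult) auto
            ultimately have "z' + fps_const l * y \<in> ?m2" by (rule ip_add)
            thus ?thesis unfolding z'_def by simp
          qed
        qed
      qed
      have "conductor R \<subseteq> ?m2"
      proof
        fix x assume x: "x \<in> conductor R"
        show "x \<in> ?m2"
        proof (cases "x = 0")
          case True thus ?thesis by (simp add: ip_zero)
        next
          case False
          hence "?c \<le> subdegree x" using cond_sub[OF x] by blast
          thus ?thesis using claim[of e] by auto
        qed
      qed
      thus False using ncs by blast
    qed
  qed
qed

end
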